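(* Let $T$ be a rooted binary phylogenetic tree with leaf set $X$ under the $N_2$ model. Then $$RA_{\rm MP}(T)\ge 1-p_{\max},\qquad p_{\max}=\max\{p(x):x\in X\}.$$
   Context: A rooted binary phylogenetic tree is a finite tree with a distinguished root vertex $\rho$, all edges directed away from $\rho$, in which $\rho$ has out-degree 2 (or 1), and every other vertex has in-degree 1 and out-degree 0 or 2; out-degree-0 vertices are leaves, forming the leaf set $X$. Under the Neyman 2-state model $N_2$ on a state set $\mathcal A$ with $|\mathcal A|=2$, each edge $e$ carries a substitution probability $p_e\in[0,\frac12]$; given the root state $F(\rho)$, states propagate independently along edges: for an edge $(u,v)$, $F(v)=F(u)$ with probability $1-p_e$ and $F(v)$ is the other state otherwise. The character is $f=F|_X$, and $p(v)$ is the probability that $F(v)\ne F(\rho)$. Fitch sets: each leaf $x$ gets $\{f(x)\}$; a vertex with children $v_1,v_2$ gets $\mathrm{FS}(v_1)\cap\mathrm{FS}(v_2)$ if nonempty, else $\mathrm{FS}(v_1)\cup\mathrm{FS}(v_2)$; a vertex with one child gets its child's set. $\mathrm{MP}(f,T)$ is a uniformly random state from $\mathrm{FS}(\rho)$, and $RA_{\rm MP}(T)=\mathbb P(\mathrm{MP}(f,T)=\alpha\mid F(\rho)=\alpha)$. *)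

theory Defs
  imports "HOL-Probability.Probability"
begin

text \<open>Subtrees below a non-root vertex. A vertex is a leaf (labelled by an element of X)
  or has out-degree 2; each of the two outgoing edges carries its substitution
  probability p_e (first the probability on the edge, then the child subtree).\<close>
datatype 'l ptree = Leaf 'l | Node real "'l ptree" real "'l ptree"

datatype 'l phylo = Root1 real "'l ptree" | Root2 real "'l ptree" real "'l ptree"

primrec leaves :: "'l ptree \<Rightarrow> 'l list" where
  "leaves (Leaf x) = [x]"
| "leaves (Node p1 t1 p2 t2) = leaves t1 @ leaves t2"

primrec edge_probs :: "'l ptree \<Rightarrow> real list" where
  "edge_probs (Leaf x) = []"
| "edge_probs (Node p1 t1 p2 t2) = p1 # p2 # edge_probs t1 @ edge_probs t2"

fun phylo_leaves :: "'l phylo \<Rightarrow> 'l list" where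
  "phylo_leaves (Root1 p t) = leaves t"
| "phylo_leaves (Root2 p1 t1 p2 t2) = leaves t1 @ leaves t2"

fun phylo_edge_probs :: "'l phylo \<Rightarrow> real list" where
  "phylo_edge_probs (Root1 p t) = p # edge_probs t"
| "phylo_edge_probs (Root2 p1 t1 p2 t2) = p1 # p2 # edge_probs t1 @ edge_probs t2"

definition wf_N2 :: "'l phylo \<Rightarrow> bool" where
  "wf_N2 T \<longleftrightarrow> distinct (phylo_leaves T) \<and>
     (\<forall>p \<in> set (phylo_edge_probs T). 0 \<le> p \<and> p \<le> 1/2)"

definition edge_step :: "bool \<Rightarrow> real \<Rightarrow> bool pmf" where
  "edge_step a p = map_pmf (\<lambda>c. if c then \<not> a else a) (bernoulli_pmf p)"

primrec evolve :: "bool \<Rightarrow> 'l ptree \<Rightarrow> ('l \<Rightarrow> bool) pmf" where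
  "evolve a (Leaf x) = return_pmf (\<lambda>y. a)"
| "evolve a (Node p1 t1 p2 t2) =
     do { b1 \<leftarrow> edge_step a p1; f1 \<leftarrow> evolve b1 t1;
          b2 \<leftarrow> edge_step a p2; f2 \<leftarrow> evolve b2 t2;
          return_pmf (\<lambda>x. if x \<in> set (leaves t1) then f1 x else f2 x) }"

fun character :: "bool \<Rightarrow> 'l phylo \<Rightarrow> ('l \<Rightarrow> bool) pmf" where
  "character a (Root1 p t) = do { b \<leftarrow> edge_step a p; evolve b t }"
| "character a (Root2 p1 t1 p2 t2) =
     do { b1 \<leftarrow> edge_step a p1; f1 \<leftarrow> evolve b1 t1;
          b2 \<leftarrow> edge_step a p2; f2 \<leftarrow> evolve b2 t2;
          return_pmf (\<lambda>x. if x \<in> set (leaves t1) then f1 x else f2 x) }"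

definition fitch_comb :: "bool set \<Rightarrow> bool set \<Rightarrow> bool set" where
  "fitch_comb A B = (if A \<inter> B \<noteq> {} then A \<inter> B else A \<union> B)"

primrec fitch :: "('l \<Rightarrow> bool) \<Rightarrow> 'l ptree \<Rightarrow> bool set" where
  "fitch f (Leaf x) = {f x}"
| "fitch f (Node p1 t1 p2 t2) = fitch_comb (fitch f t1) (fitch f t2)"

fun fitch_root :: "('l \<Rightarrow> bool) \<Rightarrow> 'l phylo \<Rightarrow> bool set" where
  "fitch_root f (Root1 p t) = fitch f t"
| "fitch_root f (Root2 p1 t1 p2 t2) = fitch_comb (fitch f t1) (fitch f t2)"

text \<open>RA_MP(T) = P(MP(f,T) = alpha | F(rho) = alpha), MP(f,T) uniform on FS(rho).\<close>
definition RA_MP :: "bool \<Rightarrow> 'l phylo \<Rightarrow> real" where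
  "RA_MP \<alpha> T = measure_pmf.prob
     (do { f \<leftarrow> character \<alpha> T; pmf_of_set (fitch_root f T) }) {\<alpha>}"

definition p_leaf :: "bool \<Rightarrow> 'l phylo \<Rightarrow> 'l \<Rightarrow> real" where
  "p_leaf \<alpha> T x = measure_pmf.prob (character \<alpha> T) {f. f x \<noteq> \<alpha>}"

end

theory Submission
  imports Defs
begin

lemma UNIV_boolset: "(UNIV :: bool set set) = {{}, {True}, {False}, {True,False}}"
proof -
  have "\<And>S::bool set. S \<in> {{}, {True}, {False}, {True,False}}"
  proof -
    fix S :: "bool set"
    show "S \<in> {{}, {True}, {False}, {True,False}}"
      by (cases "True \<in> S"; cases "False \<in> S") (auto, (metis (full_types))+)
  qed
  thus ?thesis by blast
qed

definition FD :: "bool \<Rightarrow> 'l ptree \<Rightarrow> bool set pmf" where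
  "FD a t = map_pmf (\<lambda>f. fitch f t) (evolve a t)"

definition CD :: "bool \<Rightarrow> real \<Rightarrow> 'l ptree \<Rightarrow> bool set pmf" where
  "CD a p t = bind_pmf (edge_step a p) (\<lambda>b. FD b t)"

lemma fitch_cong: "(\<And>x. x \<in> set (leaves t) \<Longrightarrow> f x = g x) \<Longrightarrow> fitch f t = fitch g t"
  by (induction t) auto

lemma fitch_if1: "fitch (\<lambda>x. if x \<in> set (leaves t) then f x else g x) t = fitch f t"
  by (rule fitch_cong) auto

lemma fitch_if2: "set (leaves t) \<inter> A = {} \<Longrightarrow> fitch (\<lambda>x. if x \<in> A then f x else g x) t = fitch g t"
  by (rule fitch_cong) auto

lemma fitch_ne: "fitch f t \<noteq> {}"
  by (induction t) (auto simp: fitch_comb_def)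

lemma FD_empty: "pmf (FD a t) {} = 0"
  unfolding FD_def by (rule pmf_map_outside) (use fitch_ne in auto)

lemma pmf_edge_bind:
  assumes "0 \<le> p" "p \<le> 1"
  shows "pmf (bind_pmf (edge_step a p) M) x = (1-p) * pmf (M a) x + p * pmf (M (\<not>a)) x"
  using assms by (simp add: edge_step_def bind_map_pmf pmf_bind)

lemma CD_pmf:
  assumes "0 \<le> p" "p \<le> 1"
  shows "pmf (CD a p t) S = (1-p) * pmf (FD a t) S + p * pmf (FD (\<not>a) t) S"
  unfolding CD_def by (rule pmf_edge_bind[OF assms])

lemma CD_empty: "0 \<le> p \<Longrightarrow> p \<le> 1 \<Longrightarrow> pmf (CD a p t) {} = 0"
  by (simp add: CD_pmf FD_empty)

lemma FD_node:
  assumes "distinct (leaves (Node p1 t1 p2 t2))"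
  shows "FD a (Node p1 t1 p2 t2) = map_pmf (\<lambda>(S1,S2). fitch_comb S1 S2) (pair_pmf (CD a p1 t1) (CD a p2 t2))"
proof -
  have d: "set (leaves t2) \<inter> set (leaves t1) = {}" using assms by auto
  show ?thesis
    unfolding FD_def CD_def pair_pmf_def
    by (simp add: map_pmf_def bind_assoc_pmf bind_return_pmf fitch_if1 fitch_if2[OF d])
qed

lemma pmf_comb:
  fixes X Y :: "bool set pmf"
  assumes "pmf X {} = 0" "pmf Y {} = 0"
  defines "Z \<equiv> map_pmf (\<lambda>(S1,S2). fitch_comb S1 S2) (pair_pmf X Y)"
  shows "pmf Z {a} = pmf X {a} * pmf Y {a} + pmf X {a} * pmf Y UNIV + pmf X UNIV * pmf Y {a}"
    "pmf Z {\<not>a} = pmf X {\<not>a} * pmf Y {\<not>a} + pmf X {\<not>a} * pmf Y UNIV + pmf X UNIV * pmf Y {\<not>a}"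
    "pmf Z UNIV = pmf X {a} * pmf Y {\<not>a} + pmf X {\<not>a} * pmf Y {a} + pmf X UNIV * pmf Y UNIV"
proof -
  have gen: "pmf Z S = (\<Sum>S1\<in>UNIV. \<Sum>S2\<in>UNIV. if fitch_comb S1 S2 = S then pmf X S1 * pmf Y S2 else 0)" for S
  proof -
    have "pmf Z S = sum (pmf (pair_pmf X Y)) ((\<lambda>(S1,S2). fitch_comb S1 S2) -` {S})"
      unfolding Z_def pmf_map by (rule measure_measure_pmf_finite) simp
    also have "\<dots> = (\<Sum>s\<in>UNIV. if fitch_comb (fst s) (snd s) = S then pmf (pair_pmf X Y) s else 0)"
      using sum.inter_restrict[of UNIV "pmf (pair_pmf X Y)" "(\<lambda>(S1,S2). fitch_comb S1 S2) -` {S}"]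
      by (simp add: case_prod_beta)
    also have "\<dots> = (\<Sum>S1\<in>UNIV. \<Sum>S2\<in>UNIV. if fitch_comb S1 S2 = S then pmf X S1 * pmf Y S2 else 0)"
    proof -
      have "(\<Sum>S1\<in>UNIV. \<Sum>S2\<in>UNIV. if fitch_comb S1 S2 = S then pmf X S1 * pmf Y S2 else 0)
         = (\<Sum>s\<in>UNIV \<times> UNIV. if fitch_comb (fst s) (snd s) = S then pmf X (fst s) * pmf Y (snd s) else 0)"
        by (subst sum.cartesian_product) (simp add: case_prod_beta)
      also have "\<dots> = (\<Sum>s\<in>UNIV. if fitch_comb (fst s) (snd s) = S then pmf (pair_pmf X Y) s else 0)"
        by (rule sum.cong) (auto simp: pmf_pair[symmetric])
      finally show ?thesis by simp
    qed
    finally show ?thesis .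
  qed
  have u: "(UNIV :: bool set) = {True, False}" by auto
  show "pmf Z {a} = pmf X {a} * pmf Y {a} + pmf X {a} * pmf Y UNIV + pmf X UNIV * pmf Y {a}"
    "pmf Z {\<not>a} = pmf X {\<not>a} * pmf Y {\<not>a} + pmf X {\<not>a} * pmf Y UNIV + pmf X UNIV * pmf Y {\<not>a}"
    "pmf Z UNIV = pmf X {a} * pmf Y {\<not>a} + pmf X {\<not>a} * pmf Y {a} + pmf X UNIV * pmf Y UNIV"
    unfolding gen UNIV_boolset u
    by (cases a; simp add: fitch_comb_def assms insert_commute; simp add: algebra_simps)+
qed

fun ch :: "real \<Rightarrow> real \<times> real \<times> real \<Rightarrow> real \<times> real \<times> real" where
  "ch p (x,y,z) = ((1-p)*x+p*y, (1-p)*y+p*x, z)"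

fun comb3 :: "real \<times> real \<times> real \<Rightarrow> real \<times> real \<times> real \<Rightarrow> real \<times> real \<times> real" where
  "comb3 (a1,c1,m1) (a2,c2,m2) = (a1*a2+a1*m2+m1*a2, c1*c2+c1*m2+m1*c2, a1*c2+c1*a2+m1*m2)"

primrec st :: "'l ptree \<Rightarrow> real \<times> real \<times> real" where
  "st (Leaf x) = (1,0,0)"
| "st (Node p1 t1 p2 t2) = comb3 (ch p1 (st t1)) (ch p2 (st t2))"

primrec pp :: "'l ptree \<Rightarrow> 'l \<Rightarrow> real" where
  "pp (Leaf y) x = 1"
| "pp (Node p1 t1 p2 t2) x = (if x \<in> set (leaves t1) then (1-2*p1) * pp t1 x else (1-2*p2) * pp t2 x)"

definition okt :: "'l ptree \<Rightarrow> bool" where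
  "okt t \<longleftrightarrow> distinct (leaves t) \<and> (\<forall>p \<in> set (edge_probs t). 0 \<le> p \<and> p \<le> 1/2)"

lemma okt_node: "okt (Node p1 t1 p2 t2) \<Longrightarrow> okt t1 \<and> okt t2 \<and> 0 \<le> p1 \<and> p1 \<le> 1/2 \<and> 0 \<le> p2 \<and> p2 \<le> 1/2
   \<and> set (leaves t1) \<inter> set (leaves t2) = {}"
  by (auto simp: okt_def)

lemma CD_st:
  assumes "\<And>b. st t = (pmf (FD b t) {b}, pmf (FD b t) {\<not>b}, pmf (FD b t) UNIV)" "0 \<le> p" "p \<le> 1"
  shows "ch p (st t) = (pmf (CD a p t) {a}, pmf (CD a p t) {\<not>a}, pmf (CD a p t) UNIV)"
proof -
  have e1: "st t = (pmf (FD a t) {a}, pmf (FD a t) {\<not>a}, pmf (FD a t) UNIV)" by (rule assms(1))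
  have e2: "st t = (pmf (FD (\<not>a) t) {\<not>a}, pmf (FD (\<not>a) t) {a}, pmf (FD (\<not>a) t) UNIV)"
    using assms(1)[of "\<not>a"] by simp
  show ?thesis
    using e1 e2 assms(2,3) by (simp add: CD_pmf algebra_simps)
qed

lemma FD_st: "okt t \<Longrightarrow> st t = (pmf (FD a t) {a}, pmf (FD a t) {\<not>a}, pmf (FD a t) UNIV)"
proof (induction t arbitrary: a)
  case (Leaf x)
  have "{a} \<noteq> (UNIV :: bool set)" by (cases a) auto
  then show ?case by (simp add: FD_def)
next
  case (Node p1 t1 p2 t2)
  note o = okt_node[OF Node.prems]
  have c1: "ch p1 (st t1) = (pmf (CD a p1 t1) {a}, pmf (CD a p1 t1) {\<not>a}, pmf (CD a p1 t1) UNIV)"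
    by (rule CD_st) (use Node.IH(1) o in auto)
  have c2: "ch p2 (st t2) = (pmf (CD a p2 t2) {a}, pmf (CD a p2 t2) {\<not>a}, pmf (CD a p2 t2) UNIV)"
    by (rule CD_st) (use Node.IH(2) o in auto)
  have d: "distinct (leaves (Node p1 t1 p2 t2))" using Node.prems by (simp add: okt_def)
  have ce: "pmf (CD a p1 t1) {} = 0" "pmf (CD a p2 t2) {} = 0" using o by (auto intro!: CD_empty)
  show ?case
    unfolding FD_node[OF d] pmf_comb[OF ce, of a] st.simps c1 c2 by simp
qed

lemma triple_sum: "pmf X {} = 0 \<Longrightarrow> pmf X {a} + pmf X {\<not>a} + pmf X UNIV = 1"
proof -
  assume z: "pmf X {} = 0"
  have u: "(UNIV :: bool set) = {True, False}" by auto
  have "sum (pmf X) UNIV = 1" by (rule sum_pmf_eq_1) auto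
  then show ?thesis unfolding UNIV_boolset u using z by (cases a) (auto simp: insert_commute)
qed

lemma st_prob: "okt t \<Longrightarrow> st t = (x,y,z) \<Longrightarrow> 0 \<le> x \<and> 0 \<le> y \<and> 0 \<le> z \<and> x + y + z = 1"
  using FD_st[of t True] triple_sum[of "FD True t" True] FD_empty[of True t] by auto

lemma pp_nonneg: "okt t \<Longrightarrow> 0 \<le> pp t x"
  by (induction t) (auto dest!: okt_node)

lemma real_bound:
  fixes a1 c1 m1 a2 c2 m2 :: real
  assumes "0 \<le> m1" "0 \<le> m2" "a1 + c1 + m1 = 1" "a2 + c2 + m2 = 1" "c1 \<le> a1" "c2 \<le> a2"
  shows "min (a1-c1) (a2-c2) \<le> (a1*a2+a1*m2+m1*a2) - (c1*c2+c1*m2+m1*c2)"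
proof -
  have m: "m1 = 1 - a1 - c1" "m2 = 1 - a2 - c2" using assms by auto
  have eq: "(a1*a2+a1*m2+m1*a2) - (c1*c2+c1*m2+m1*c2) = (a1-c1)*((1+m2)/2) + (a2-c2)*((1+m1)/2)"
    unfolding m by (simp add: field_simps)
  have "min (a1-c1) (a2-c2) * 1 \<le> min (a1-c1) (a2-c2) * ((1+m2)/2 + (1+m1)/2)"
    using assms by (intro mult_left_mono) (auto simp: field_simps)
  also have "\<dots> \<le> (a1-c1)*((1+m2)/2) + (a2-c2)*((1+m1)/2)"
  proof -
    have "min (a1-c1) (a2-c2) * ((1+m2)/2) \<le> (a1-c1)*((1+m2)/2)"
      using assms by (intro mult_right_mono) auto
    moreover have "min (a1-c1) (a2-c2) * ((1+m1)/2) \<le> (a2-c2)*((1+m1)/2)"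
      using assms by (intro mult_right_mono) auto
    ultimately show ?thesis by (simp only: distrib_left)
  qed
  finally show ?thesis using eq by simp
qed

lemma st_bound: "okt t \<Longrightarrow> \<exists>x\<in>set (leaves t). pp t x \<le> fst (st t) - fst (snd (st t))"
proof (induction t)
  case (Leaf y)
  then show ?case by simp
next
  case (Node p1 t1 p2 t2)
  note o = okt_node[OF Node.prems]
  obtain x1 y1 z1 where s1: "st t1 = (x1,y1,z1)" by (metis prod.exhaust)
  obtain x2 y2 z2 where s2: "st t2 = (x2,y2,z2)" by (metis prod.exhaust)
  have P1: "0 \<le> x1 \<and> 0 \<le> y1 \<and> 0 \<le> z1 \<and> x1 + y1 + z1 = 1" using st_prob[OF _ s1] o by auto
  have P2: "0 \<le> x2 \<and> 0 \<le> y2 \<and> 0 \<le> z2 \<and> x2 + y2 + z2 = 1" using st_prob[OF _ s2] o by auto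
  obtain u1 where u1: "u1 \<in> set (leaves t1)" "pp t1 u1 \<le> x1 - y1" using Node.IH(1) o s1 by auto
  obtain u2 where u2: "u2 \<in> set (leaves t2)" "pp t2 u2 \<le> x2 - y2" using Node.IH(2) o s2 by auto
  have u2n: "u2 \<notin> set (leaves t1)" using o u2 by auto
  define e1 where "e1 = (1-2*p1)*(x1-y1)"
  define e2 where "e2 = (1-2*p2)*(x2-y2)"
  have pe1: "pp (Node p1 t1 p2 t2) u1 \<le> e1" unfolding e1_def using u1 o by (simp add: mult_left_mono)
  have pe2: "pp (Node p1 t1 p2 t2) u2 \<le> e2" unfolding e2_def using u2 u2n o by (simp add: mult_left_mono)
  have g1: "0 \<le> e1" using pe1 pp_nonneg[OF Node.prems] by (meson order_trans)
  have g2: "0 \<le> e2" using pe2 pp_nonneg[OF Node.prems] by (meson order_trans)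
  have "min e1 e2 \<le> fst (st (Node p1 t1 p2 t2)) - fst (snd (st (Node p1 t1 p2 t2)))"
  proof -
    have "min (((1-p1)*x1+p1*y1) - ((1-p1)*y1+p1*x1)) (((1-p2)*x2+p2*y2) - ((1-p2)*y2+p2*x2))
       \<le> (((1-p1)*x1+p1*y1)*((1-p2)*x2+p2*y2)+((1-p1)*x1+p1*y1)*z2+z1*((1-p2)*x2+p2*y2))
        - (((1-p1)*y1+p1*x1)*((1-p2)*y2+p2*x2)+((1-p1)*y1+p1*x1)*z2+z1*((1-p2)*y2+p2*x2))"
      apply (rule real_bound)
      using P1 P2 g1 g2 unfolding e1_def e2_def by (auto simp: algebra_simps)
    moreover have "((1-p1)*x1+p1*y1) - ((1-p1)*y1+p1*x1) = e1"
      "((1-p2)*x2+p2*y2) - ((1-p2)*y2+p2*x2) = e2" unfolding e1_def e2_def by (simp_all add: algebra_simps)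
    ultimately show ?thesis by (simp add: s1 s2)
  qed
  then show ?case using pe1 pe2 u1 u2 by (cases "e1 \<le> e2") (auto simp: min_def intro: bexI[of _ u1] bexI[of _ u2])
qed

lemma pmf_bool_compl: "pmf (M :: bool pmf) (\<not>a) = 1 - pmf M a"
proof -
  have "sum (pmf M) UNIV = 1" by (rule sum_pmf_eq_1) auto
  then show ?thesis by (cases a) (auto simp: UNIV_bool)
qed

lemma V_node1: "x \<in> set (leaves t1) \<Longrightarrow>
  map_pmf (\<lambda>f. f x) (evolve a (Node p1 t1 p2 t2)) = bind_pmf (edge_step a p1) (\<lambda>b. map_pmf (\<lambda>f. f x) (evolve b t1))"
  by (simp add: map_pmf_def bind_assoc_pmf bind_return_pmf o_def)

lemma V_node2: "x \<notin> set (leaves t1) \<Longrightarrow>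
  map_pmf (\<lambda>f. f x) (evolve a (Node p1 t1 p2 t2)) = bind_pmf (edge_step a p2) (\<lambda>b. map_pmf (\<lambda>f. f x) (evolve b t2))"
  by (simp add: map_pmf_def bind_assoc_pmf bind_return_pmf o_def)

lemma V_edge:
  assumes "\<And>b. pmf (map_pmf (\<lambda>f. f x) (evolve b t)) (\<not>b) = (1 - q)/2" "0 \<le> p" "p \<le> 1"
  shows "pmf (bind_pmf (edge_step a p) (\<lambda>b. map_pmf (\<lambda>f. f x) (evolve b t))) (\<not>a) = (1 - (1-2*p)*q)/2"
proof -
  have h: "pmf (map_pmf (\<lambda>f. f x) (evolve (\<not>a) t)) (\<not>a) = 1 - (1-q)/2"
    using assms(1)[of "\<not>a"] pmf_bool_compl[of "map_pmf (\<lambda>f. f x) (evolve (\<not>a) t)" a] by simp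
  have h1: "pmf (map_pmf (\<lambda>f. f x) (evolve a t)) (\<not>a) = (1 - q)/2" by (rule assms(1))
  show ?thesis using assms(2,3) by (simp add: pmf_edge_bind h h1 del: pmf_map) (simp add: field_simps)
qed

lemma V_leaf: "okt t \<Longrightarrow> x \<in> set (leaves t) \<Longrightarrow> pmf (map_pmf (\<lambda>f. f x) (evolve a t)) (\<not>a) = (1 - pp t x)/2"
proof (induction t arbitrary: a)
  case (Leaf y)
  then show ?case by simp
next
  case (Node p1 t1 p2 t2)
  note o = okt_node[OF Node.prems(1)]
  show ?case
  proof (cases "x \<in> set (leaves t1)")
    case True
    show ?thesis unfolding V_node1[OF True] using True o
      by (simp add: V_edge[OF Node.IH(1)])
  next
    case False
    then have x2: "x \<in> set (leaves t2)" using Node.prems(2) by auto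
    show ?thesis unfolding V_node2[OF False] using False x2 o
      by (simp add: V_edge[OF Node.IH(2)])
  qed
qed

lemma RA_pmf:
  fixes R :: "bool set pmf" and a :: bool
  assumes "pmf R {} = 0"
  shows "pmf (bind_pmf R pmf_of_set) a = pmf R {a} + pmf R UNIV / 2"
proof -
  have fin: "finite (UNIV :: bool set set)" unfolding UNIV_boolset by simp
  have "pmf (bind_pmf R pmf_of_set) a = (\<Sum>S\<in>UNIV. pmf (pmf_of_set S) a * pmf R S)"
    unfolding pmf_bind using integral_measure_pmf_real[OF fin, of R "\<lambda>S. pmf (pmf_of_set S) a"] by simp
  also have "\<dots> = pmf R {a} + pmf R UNIV / 2"
  proof -
    have u: "(UNIV :: bool set) = {True, False}" by auto
    show ?thesis unfolding UNIV_boolset u using assms by (cases a) (auto simp: insert_commute)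
  qed
  finally show ?thesis .
qed

lemma aux_ineq: "(a::real) \<le> b \<Longrightarrow> c - d = (b - a)/2 \<Longrightarrow> d \<le> c"
  by (simp add: field_simps)

lemma RA_root: "RA_MP \<alpha> T = pmf (map_pmf (\<lambda>f. fitch_root f T) (character \<alpha> T)) {\<alpha>}
   + pmf (map_pmf (\<lambda>f. fitch_root f T) (character \<alpha> T)) UNIV / 2"
proof -
  have z: "pmf (map_pmf (\<lambda>f. fitch_root f T) (character \<alpha> T)) {} = 0"
    by (rule pmf_map_outside) (cases T; use fitch_ne in \<open>auto simp: fitch_comb_def\<close>)
  have "RA_MP \<alpha> T = pmf (bind_pmf (map_pmf (\<lambda>f. fitch_root f T) (character \<alpha> T)) pmf_of_set) \<alpha>"
    unfolding RA_MP_def bind_map_pmf by (simp add: measure_pmf_single)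
  then show ?thesis using RA_pmf[OF z] by simp
qed

lemma pleaf_root: "p_leaf \<alpha> T x = pmf (map_pmf (\<lambda>f. f x) (character \<alpha> T)) (\<not>\<alpha>)"
  unfolding p_leaf_def pmf_map by (rule arg_cong[where f = "measure_pmf.prob _"]) auto

theorem corollary1:
  fixes T :: "'l phylo" and \<alpha> :: bool
  assumes "wf_N2 T"
  shows "RA_MP \<alpha> T \<ge> 1 - Max (p_leaf \<alpha> T ` set (phylo_leaves T))"
proof -
  have key: "\<exists>x \<in> set (phylo_leaves T). RA_MP \<alpha> T \<ge> 1 - p_leaf \<alpha> T x"
  proof (cases T)
    case (Root1 p t)
    have ok: "okt t" and p: "0 \<le> p" "p \<le> 1/2" using assms Root1 by (auto simp: wf_N2_def okt_def)
    have R: "map_pmf (\<lambda>f. fitch_root f T) (character \<alpha> T) = CD \<alpha> p t"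
      unfolding Root1 CD_def FD_def by (simp add: map_bind_pmf)
    obtain x1 y1 z1 where s1: "st t = (x1,y1,z1)" by (metis prod.exhaust)
    have P1: "0 \<le> x1 \<and> 0 \<le> y1 \<and> 0 \<le> z1 \<and> x1 + y1 + z1 = 1" using st_prob[OF ok s1] .
    obtain u where u: "u \<in> set (leaves t)" "pp t u \<le> x1 - y1" using st_bound[OF ok] s1 by auto
    have c: "ch p (st t) = (pmf (CD \<alpha> p t) {\<alpha>}, pmf (CD \<alpha> p t) {\<not>\<alpha>}, pmf (CD \<alpha> p t) UNIV)"
      by (rule CD_st) (use FD_st[OF ok] p in auto)
    have ra: "RA_MP \<alpha> T = ((1-p)*x1+p*y1) + z1/2" using RA_root[of \<alpha> T] R c s1 by simp
    have pl: "p_leaf \<alpha> T u = (1 - (1-2*p)*pp t u)/2"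
      unfolding pleaf_root Root1 using p
      by (simp add: map_bind_pmf V_edge[OF V_leaf[OF ok u(1)]])
    have "(1-2*p)*pp t u \<le> (1-2*p)*(x1-y1)" using u p by (intro mult_left_mono) auto
    moreover have "RA_MP \<alpha> T - (1 - p_leaf \<alpha> T u) = ((1-2*p)*(x1-y1) - (1-2*p)*pp t u)/2"
      unfolding ra pl using P1 by (simp add: field_simps)
    ultimately have "RA_MP \<alpha> T \<ge> 1 - p_leaf \<alpha> T u"
      using aux_ineq by blast
    then show ?thesis using u Root1 by auto
  next
    case (Root2 p1 t1 p2 t2)
    define t where "t = Node p1 t1 p2 t2"
    have ok: "okt t" using assms Root2 by (auto simp: wf_N2_def okt_def t_def)
    have R: "map_pmf (\<lambda>f. fitch_root f T) (character \<alpha> T) = FD \<alpha> t"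
      unfolding Root2 FD_def t_def by simp
    have ch: "map_pmf (\<lambda>f. f x) (character \<alpha> T) = map_pmf (\<lambda>f. f x) (evolve \<alpha> t)" for x
      unfolding Root2 t_def by simp
    obtain x1 y1 z1 where s1: "st t = (x1,y1,z1)" by (metis prod.exhaust)
    have P1: "0 \<le> x1 \<and> 0 \<le> y1 \<and> 0 \<le> z1 \<and> x1 + y1 + z1 = 1" using st_prob[OF ok s1] .
    obtain u where u: "u \<in> set (leaves t)" "pp t u \<le> x1 - y1" using st_bound[OF ok] s1 by auto
    have ra: "RA_MP \<alpha> T = x1 + z1/2" using RA_root[of \<alpha> T] R FD_st[OF ok, of \<alpha>] s1 by simp
    have pl: "p_leaf \<alpha> T u = (1 - pp t u)/2"
      unfolding pleaf_root ch by (rule V_leaf[OF ok u(1)])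
    have "RA_MP \<alpha> T \<ge> 1 - p_leaf \<alpha> T u" unfolding ra pl using P1 u by (simp add: field_simps)
    then show ?thesis using u Root2 by (auto simp: t_def)
  qed
  then obtain x where x: "x \<in> set (phylo_leaves T)" "RA_MP \<alpha> T \<ge> 1 - p_leaf \<alpha> T x" by blast
  have "p_leaf \<alpha> T x \<le> Max (p_leaf \<alpha> T ` set (phylo_leaves T))"
    using x(1) by (intro Max_ge) auto
  then show ?thesis using x(2) by linarith
qed

end
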